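(* Let $f:\mathbb{R}^d\to\mathbb{R}$ be differentiable and run AdaSGD (as defined in the context) with parameters $\eta,\gamma>0$ using a stochastic gradient oracle with bounded affine noise with parameters $\sigma_0,\sigma_1\ge0$. Then for all $1\le s\le T$, $$|\tilde\eta_s-\eta_s|\le\frac{2\tilde\eta_s\sqrt{\sigma_0^2+\sigma_1^2\|\nabla f(w_s)\|^2}}{G_s}.$$
   Context: $\|\cdot\|$ is the Euclidean norm. Oracle: queried at $w$, returns random $g(w)$ with $\mathbb{E}[g(w)\mid w]=\nabla f(w)$ and, with probability one, $\|g(w)-\nabla f(w)\|^2\le\sigma_0^2+\sigma_1^2\|\nabla f(w)\|^2$. AdaSGD: arbitrary $w_1$; for $t=1,\dots,T$, $g_t=g(w_t)$, $G_t=\sqrt{\gamma^2+\sum_{s=1}^t\|g_s\|^2}$ ($G_0=\gamma$), $\eta_t=\eta/G_t$, $w_{t+1}=w_t-\eta_tg_t$. Decorrelated step sizes: $\tilde\eta_t=\eta/\sqrt{G_{t-1}^2+(1+\sigma_1^2)\|\nabla f(w_t)\|^2+\sigma_0^2}$. *)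

theory Defs
  imports "HOL-Analysis.Analysis"
begin

definition Gacc :: "real \<Rightarrow> (nat \<Rightarrow> 'a::real_normed_vector) \<Rightarrow> nat \<Rightarrow> real" where
  "Gacc \<gamma> g t = sqrt (\<gamma>\<^sup>2 + (\<Sum>s=1..t. (norm (g s))\<^sup>2))"

definition ada_step :: "real \<Rightarrow> real \<Rightarrow> (nat \<Rightarrow> 'a::real_normed_vector) \<Rightarrow> nat \<Rightarrow> real" where
  "ada_step \<eta> \<gamma> g t = \<eta> / Gacc \<gamma> g t"

definition decor_step :: "real \<Rightarrow> real \<Rightarrow> real \<Rightarrow> real \<Rightarrow> ('a::real_normed_vector \<Rightarrow> 'a)
    \<Rightarrow> (nat \<Rightarrow> 'a) \<Rightarrow> (nat \<Rightarrow> 'a) \<Rightarrow> nat \<Rightarrow> real" where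
  "decor_step \<eta> \<gamma> \<sigma>\<^sub>0 \<sigma>\<^sub>1 gradf w g t =
     \<eta> / sqrt ((Gacc \<gamma> g (t - 1))\<^sup>2 + (1 + \<sigma>\<^sub>1\<^sup>2) * (norm (gradf (w t)))\<^sup>2 + \<sigma>\<^sub>0\<^sup>2)"

end

theory Submission
  imports Defs
begin

lemma key:
  fixes a x y S :: real
  assumes a: "a \<ge> 0" and x: "x \<ge> 0" and y: "y \<ge> 0" and S: "S \<ge> 0"
    and d: "\<bar>x - y\<bar> \<le> S"
  shows "\<bar>sqrt (a + y\<^sup>2 + S\<^sup>2) - sqrt (a + x\<^sup>2)\<bar> \<le> 2 * S"
proof -
  let ?G = "sqrt (a + x\<^sup>2)" and ?H = "sqrt (a + y\<^sup>2 + S\<^sup>2)"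
  have G0: "?G \<ge> 0" and H0: "?H \<ge> 0" using a by auto
  have GG: "?G\<^sup>2 = a + x\<^sup>2" using a by simp
  have HH: "?H\<^sup>2 = a + y\<^sup>2 + S\<^sup>2" using a by simp
  have xG: "x \<le> ?G" using a x by (simp add: real_le_rsqrt)
  have yH: "y \<le> ?H" using a y by (simp add: real_le_rsqrt)
  have x2: "x\<^sup>2 \<le> y\<^sup>2 + 2*(y*S) + S\<^sup>2"
  proof -
    have "x \<le> y + S" using d by linarith
    hence "x\<^sup>2 \<le> (y+S)\<^sup>2" using x by (simp add: power_mono)
    thus ?thesis by (simp add: power2_eq_square algebra_simps)
  qed
  have y2: "y\<^sup>2 \<le> x\<^sup>2 + 2*(x*S) + S\<^sup>2"
  proof -
    have "y \<le> x + S" using d by linarith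
    hence "y\<^sup>2 \<le> (x+S)\<^sup>2" using y by (simp add: power_mono)
    thus ?thesis by (simp add: power2_eq_square algebra_simps)
  qed
  have "?G\<^sup>2 \<le> (?H + 2*S)\<^sup>2"
  proof -
    have "y*S \<le> ?H*S" using yH S by (simp add: mult_right_mono)
    moreover have "(?H + 2*S)\<^sup>2 = ?H\<^sup>2 + 4*(?H*S) + 4*S\<^sup>2" by (simp add: power2_eq_square algebra_simps)
    moreover have "0 \<le> ?H*S" using H0 S by simp
    ultimately show ?thesis using GG HH x2 S zero_le_power2[of S] by linarith
  qed
  hence 1: "?G \<le> ?H + 2*S" using H0 S by (meson add_nonneg_nonneg mult_nonneg_nonneg zero_le_numeral power2_le_imp_le)
  have "?H\<^sup>2 \<le> (?G + 2*S)\<^sup>2"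
  proof -
    have "x*S \<le> ?G*S" using xG S by (simp add: mult_right_mono)
    moreover have "(?G + 2*S)\<^sup>2 = ?G\<^sup>2 + 4*(?G*S) + 4*S\<^sup>2" by (simp add: power2_eq_square algebra_simps)
    moreover have "0 \<le> ?G*S" using G0 S by simp
    ultimately show ?thesis using GG HH y2 S zero_le_power2[of S] by linarith
  qed
  hence 2: "?H \<le> ?G + 2*S" using G0 S by (meson add_nonneg_nonneg mult_nonneg_nonneg zero_le_numeral power2_le_imp_le)
  show ?thesis using 1 2 by linarith
qed

theorem lemma11:
  fixes f :: "real ^ 'd \<Rightarrow> real"
    and gradf :: "real ^ 'd \<Rightarrow> real ^ 'd"
    and w g :: "nat \<Rightarrow> real ^ 'd"
    and \<eta> \<gamma> \<sigma>\<^sub>0 \<sigma>\<^sub>1 :: real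
    and T :: nat
  assumes grad: "\<And>x. (f has_derivative (\<lambda>h. gradf x \<bullet> h)) (at x)"
    and eta_pos: "\<eta> > 0" and gamma_pos: "\<gamma> > 0"
    and sigma0_nonneg: "\<sigma>\<^sub>0 \<ge> 0" and sigma1_nonneg: "\<sigma>\<^sub>1 \<ge> 0"
    and noise: "\<And>t. 1 \<le> t \<Longrightarrow> t \<le> T \<Longrightarrow>
        (norm (g t - gradf (w t)))\<^sup>2 \<le> \<sigma>\<^sub>0\<^sup>2 + \<sigma>\<^sub>1\<^sup>2 * (norm (gradf (w t)))\<^sup>2"
    and update: "\<And>t. 1 \<le> t \<Longrightarrow> t \<le> T \<Longrightarrow>
        w (Suc t) = w t - ada_step \<eta> \<gamma> g t *\<^sub>R g t"
  shows "\<forall>s. 1 \<le> s \<and> s \<le> T \<longrightarrow>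
    \<bar>decor_step \<eta> \<gamma> \<sigma>\<^sub>0 \<sigma>\<^sub>1 gradf w g s - ada_step \<eta> \<gamma> g s\<bar>
      \<le> 2 * decor_step \<eta> \<gamma> \<sigma>\<^sub>0 \<sigma>\<^sub>1 gradf w g s
          * sqrt (\<sigma>\<^sub>0\<^sup>2 + \<sigma>\<^sub>1\<^sup>2 * (norm (gradf (w s)))\<^sup>2) / Gacc \<gamma> g s"
proof (intro allI impI)
  fix s assume s: "1 \<le> s \<and> s \<le> T"
  define a where "a = \<gamma>\<^sup>2 + (\<Sum>t=1..s-1. (norm (g t))\<^sup>2)"
  define x where "x = norm (g s)"
  define y where "y = norm (gradf (w s))"
  define S where "S = sqrt (\<sigma>\<^sub>0\<^sup>2 + \<sigma>\<^sub>1\<^sup>2 * y\<^sup>2)"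
  have a0: "a > 0" unfolding a_def using gamma_pos by (simp add: sum_nonneg add_pos_nonneg)
  have S0: "S \<ge> 0" unfolding S_def by simp
  have SS: "S\<^sup>2 = \<sigma>\<^sub>0\<^sup>2 + \<sigma>\<^sub>1\<^sup>2 * y\<^sup>2" unfolding S_def by simp
  have "norm (g s - gradf (w s)) \<le> S"
    unfolding S_def y_def using noise[of s] s by (simp add: real_le_rsqrt)
  moreover have "\<bar>x - y\<bar> \<le> norm (g s - gradf (w s))"
    unfolding x_def y_def by (rule norm_triangle_ineq3)
  ultimately have d: "\<bar>x - y\<bar> \<le> S" by linarith
  have Gs: "Gacc \<gamma> g s = sqrt (a + x\<^sup>2)"
  proof -
    obtain k where k: "s = Suc k" using s by (cases s) auto
    have "(\<Sum>t=1..s. (norm (g t))\<^sup>2) = (norm (g s))\<^sup>2 + (\<Sum>t=1..s-1. (norm (g t))\<^sup>2)"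
      unfolding k by (simp add: sum.cl_ivl_Suc)
    thus ?thesis unfolding Gacc_def a_def x_def by (simp add: algebra_simps)
  qed
  have Gp: "(Gacc \<gamma> g (s-1))\<^sup>2 = a" unfolding Gacc_def a_def
    by (simp add: sum_nonneg add_nonneg_nonneg)
  have Hs: "decor_step \<eta> \<gamma> \<sigma>\<^sub>0 \<sigma>\<^sub>1 gradf w g s = \<eta> / sqrt (a + y\<^sup>2 + S\<^sup>2)"
    unfolding decor_step_def Gp SS y_def by (simp add: algebra_simps)
  have As: "ada_step \<eta> \<gamma> g s = \<eta> / sqrt (a + x\<^sup>2)" unfolding ada_step_def Gs ..
  define G where "G = sqrt (a + x\<^sup>2)"
  define H where "H = sqrt (a + y\<^sup>2 + S\<^sup>2)"
  have G0: "G > 0" unfolding G_def using a0 by (simp add: add_pos_nonneg)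
  have H0: "H > 0" unfolding H_def using a0 by (simp add: add_pos_nonneg)
  have k: "\<bar>H - G\<bar> \<le> 2 * S" unfolding H_def G_def
    by (rule key) (use a0 S0 d in \<open>auto simp: x_def y_def\<close>)
  have "\<bar>\<eta>/H - \<eta>/G\<bar> = \<eta> * \<bar>H - G\<bar> / (H*G)"
  proof -
    have "\<eta>/H - \<eta>/G = \<eta> * (G - H) / (H*G)" using G0 H0 by (simp add: field_simps)
    moreover have "\<bar>\<eta> * (G - H)\<bar> = \<eta> * \<bar>H - G\<bar>" using eta_pos by (simp add: abs_mult abs_minus_commute)
    ultimately show ?thesis using G0 H0 by (simp add: abs_div abs_mult)
  qed
  also have "\<dots> \<le> \<eta> * (2*S) / (H*G)"
    using k eta_pos G0 H0 by (simp add: divide_right_mono mult_left_mono)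
  also have "\<dots> = 2 * (\<eta>/H) * S / G" by simp
  finally show "\<bar>decor_step \<eta> \<gamma> \<sigma>\<^sub>0 \<sigma>\<^sub>1 gradf w g s - ada_step \<eta> \<gamma> g s\<bar>
      \<le> 2 * decor_step \<eta> \<gamma> \<sigma>\<^sub>0 \<sigma>\<^sub>1 gradf w g s
          * sqrt (\<sigma>\<^sub>0\<^sup>2 + \<sigma>\<^sub>1\<^sup>2 * (norm (gradf (w s)))\<^sup>2) / Gacc \<gamma> g s"
    unfolding Hs As Gs G_def[symmetric] H_def[symmetric] S_def[symmetric] y_def[symmetric] .
qed

end
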